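(* Let $G$ and $H$ be finitely generated groups acting transitively on sets $X$ and $Y$ respectively. If $\mathrm{Con}(G\curvearrowright X)=\mathrm{Con}(H\curvearrowright Y)$, then $|X|=|Y|$.
   Context: For an action $G\curvearrowright X$, an ordered tuple $\mathfrak{g}=(g_1,\dots,g_n)$ of elements of $G$ and a finite partition $\mathcal{E}=\{E_1,\dots,E_m\}$ of $X$ (a configuration pair), a configuration is a tuple $C=(C_0,\dots,C_n)\in\{1,\dots,m\}^{n+1}$ such that some $x\in E_{C_0}$ satisfies $g_i\cdot x\in E_{C_i}$ for $i=1,\dots,n$; the set of these is $\mathrm{Con}(\mathfrak{g},\mathcal{E};X)$. Then $\mathrm{Con}(G\curvearrowright X)=\{\mathrm{Con}(\mathfrak{g},\mathcal{E};X): (\mathfrak{g},\mathcal{E})\text{ a configuration pair}\}$. *)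

theory Defs
  imports "HOL-Algebra.Group_Action" "HOL-Algebra.Generated_Groups" "HOL-Library.Equipollence"
begin

definition finitely_generated_group :: "('g, 'b) monoid_scheme \<Rightarrow> bool" where
  "finitely_generated_group G \<longleftrightarrow>
     (\<exists>S. finite S \<and> S \<subseteq> carrier G \<and> generate G S = carrier G)"

definition transitive_action :: "('g, 'b) monoid_scheme \<Rightarrow> 'x set \<Rightarrow> ('g \<Rightarrow> 'x \<Rightarrow> 'x) \<Rightarrow> bool" where
  "transitive_action G X \<phi> \<longleftrightarrow>
     group_action G X \<phi> \<and> (\<forall>x\<in>X. \<forall>y\<in>X. \<exists>g\<in>carrier G. \<phi> g x = y)"

definition is_partition_of :: "'x set \<Rightarrow> nat \<Rightarrow> (nat \<Rightarrow> 'x set) \<Rightarrow> bool" where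
  "is_partition_of X m E \<longleftrightarrow>
     (\<forall>i\<in>{1..m}. E i \<noteq> {} \<and> E i \<subseteq> X) \<and>
     (\<forall>i\<in>{1..m}. \<forall>j\<in>{1..m}. i \<noteq> j \<longrightarrow> E i \<inter> E j = {}) \<and>
     (\<Union>i\<in>{1..m}. E i) = X"

text \<open>Con(g, E; X) for g = (g_1,...,g_n) given as a list and E = (E_1,...,E_m);
  a configuration C = (C_0,...,C_n) is a list of length n+1.\<close>
definition configurations ::
  "('g \<Rightarrow> 'x \<Rightarrow> 'x) \<Rightarrow> 'g list \<Rightarrow> nat \<Rightarrow> (nat \<Rightarrow> 'x set) \<Rightarrow> nat list set" where
  "configurations \<phi> gs m E =
     {C. length C = length gs + 1 \<and> set C \<subseteq> {1..m} \<and>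
         (\<exists>x \<in> E (C ! 0). \<forall>i\<in>{1..length gs}. \<phi> (gs ! (i - 1)) x \<in> E (C ! i))}"

definition Con :: "('g, 'b) monoid_scheme \<Rightarrow> 'x set \<Rightarrow> ('g \<Rightarrow> 'x \<Rightarrow> 'x) \<Rightarrow> nat list set set" where
  "Con G X \<phi> =
     {configurations \<phi> gs m E | gs m E. set gs \<subseteq> carrier G \<and> is_partition_of X m E}"

end

theory Submission
  imports Defs "HOL-Library.Countable_Set"
begin

primrec gW :: "('g, 'b) monoid_scheme \<Rightarrow> 'g set \<Rightarrow> nat \<Rightarrow> 'g set" where
  "gW G S 0 = insert \<one>\<^bsub>G\<^esub> (S \<union> (\<lambda>h. inv\<^bsub>G\<^esub> h) ` S)"
| "gW G S (Suc n) = gW G S n \<union> (\<lambda>(a,b). a \<otimes>\<^bsub>G\<^esub> b) ` (gW G S n \<times> gW G S n)"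

lemma gW_finite: "finite S \<Longrightarrow> finite (gW G S n)"
  by (induction n) auto

lemma gW_mono: "m \<le> n \<Longrightarrow> gW G S m \<subseteq> gW G S n"
  by (rule lift_Suc_mono_le[where f="gW G S"]) auto

lemma gen_in_gW: "x \<in> generate G S \<Longrightarrow> \<exists>n. x \<in> gW G S n"
proof (induction rule: generate.induct)
  case one then show ?case by (intro exI[of _ 0]) simp
next
  case (incl h) then show ?case by (intro exI[of _ 0]) simp
next
  case (inv h) then show ?case by (intro exI[of _ 0]) simp
next
  case (eng h1 h2)
  then obtain n1 n2 where a: "h1 \<in> gW G S n1" "h2 \<in> gW G S n2" by blast
  have "h1 \<in> gW G S (max n1 n2)" "h2 \<in> gW G S (max n1 n2)"
    using a gW_mono[of n1 "max n1 n2" G S] gW_mono[of n2 "max n1 n2" G S] by auto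
  then have "h1 \<otimes>\<^bsub>G\<^esub> h2 \<in> (\<lambda>(a,b). a \<otimes>\<^bsub>G\<^esub> b) ` (gW G S (max n1 n2) \<times> gW G S (max n1 n2))"
    by (intro image_eqI[where x="(h1,h2)"]) auto
  then have "h1 \<otimes>\<^bsub>G\<^esub> h2 \<in> gW G S (Suc (max n1 n2))" by simp
  then show ?case by (rule exI)
qed

lemma fg_countable:
  assumes "finitely_generated_group G" shows "countable (carrier G)"
proof -
  obtain S where S: "finite S" "generate G S = carrier G"
    using assms unfolding finitely_generated_group_def by blast
  have "carrier G \<subseteq> (\<Union>n. gW G S n)"
  proof
    fix x assume "x \<in> carrier G"
    then have "x \<in> generate G S" using S(2) by simp
    then obtain n where "x \<in> gW G S n" using gen_in_gW by metis
    then show "x \<in> (\<Union>n. gW G S n)" by (rule UN_I[OF UNIV_I])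
  qed
  moreover have "countable (\<Union>n. gW G S n)"
  proof (rule countable_UN)
    fix n show "countable (gW G S n)" using gW_finite[OF S(1)] by (rule countable_finite)
  qed simp
  ultimately show ?thesis by (rule countable_subset)
qed

lemma trans_countable:
  assumes "finitely_generated_group G" "transitive_action G X \<phi>"
  shows "countable X"
proof (cases "X = {}")
  case False
  then obtain x0 where x0: "x0 \<in> X" by blast
  have "X \<subseteq> (\<lambda>g. \<phi> g x0) ` carrier G"
  proof
    fix y assume "y \<in> X"
    then obtain g where "g \<in> carrier G" "\<phi> g x0 = y"
      using assms(2) x0 unfolding transitive_action_def by blast
    then show "y \<in> (\<lambda>g. \<phi> g x0) ` carrier G" by blast
  qed
  moreover have "countable ((\<lambda>g. \<phi> g x0) ` carrier G)"
    using fg_countable[OF assms(1)] by (rule countable_image)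
  ultimately show ?thesis by (rule countable_subset)
qed simp

definition Pt :: "'x set \<Rightarrow> nat \<Rightarrow> bool" where
  "Pt X m \<longleftrightarrow> (\<exists>E. is_partition_of X m E)"

lemma conf_nil:
  assumes "is_partition_of X m E"
  shows "configurations \<phi> [] m E = {[i] | i. i \<in> {1..m}}"
proof -
  have "C \<in> configurations \<phi> [] m E \<longleftrightarrow> C \<in> {[i] | i. i \<in> {1..m}}" for C
  proof
    assume "C \<in> configurations \<phi> [] m E"
    then have "length C = 1" "set C \<subseteq> {1..m}" unfolding configurations_def by auto
    then show "C \<in> {[i] | i. i \<in> {1..m}}"
      by (cases C) auto
  next
    assume "C \<in> {[i] | i. i \<in> {1..m}}"
    then obtain i where "C = [i]" "i \<in> {1..m}" by blast
    moreover then have "E i \<noteq> {}" using assms unfolding is_partition_of_def by blast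
    ultimately show "C \<in> configurations \<phi> [] m E"
      unfolding configurations_def by auto
  qed
  then show ?thesis by blast
qed

lemma Pt_transfer:
  assumes "Con G X \<phi> = Con H Y \<psi>" "Pt X m" "m \<ge> 1"
  shows "Pt Y m"
proof -
  obtain E where E: "is_partition_of X m E" using assms(2) Pt_def by blast
  have "configurations \<phi> [] m E \<in> Con G X \<phi>" unfolding Con_def using E by force
  then have "configurations \<phi> [] m E \<in> Con H Y \<psi>" using assms(1) by simp
  then obtain gs m' E' where eq: "configurations \<phi> [] m E = configurations \<psi> gs m' E'"
    and P: "is_partition_of Y m' E'" unfolding Con_def by blast
  have c: "configurations \<phi> [] m E = {[i] | i. i \<in> {1..m}}" by (rule conf_nil[OF E])
  have "[1] \<in> configurations \<psi> gs m' E'" using eq c assms(3) by auto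
  then have "gs = []" unfolding configurations_def by auto
  then have c2: "configurations \<psi> gs m' E' = {[i] | i. i \<in> {1..m'}}" using conf_nil[OF P] by simp
  have s: "{[i] | i. i \<in> {1..m}} = {[i] | i. i \<in> {1..m'}}" using eq c c2 by simp
  have "[m] \<in> {[i] | i. i \<in> {1..m'}}" using s assms(3) by (metis (mono_tags, lifting) atLeastAtMost_iff mem_Collect_eq order_refl)
  moreover have "[m'] \<in> {[i] | i. i \<in> {1..m}}"
  proof -
    have "[1] \<in> {[i] | i. i \<in> {1..m'}}" using s assms(3) by auto
    then have "m' \<ge> 1" by auto
    then show ?thesis using s by auto
  qed
  ultimately have "m = m'" by auto
  then show ?thesis using P Pt_def by blast
qed

lemma Pt_le_card:
  assumes "finite X" "Pt X m" shows "m \<le> card X"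
proof -
  obtain E where E: "is_partition_of X m E" using assms(2) Pt_def by blast
  define f where "f i = (SOME x. x \<in> E i)" for i
  have f: "f i \<in> E i" if "i \<in> {1..m}" for i
    using E that unfolding f_def is_partition_of_def by (metis some_in_eq)
  have "inj_on f {1..m}"
  proof (rule inj_onI)
    fix i j assume "i \<in> {1..m}" "j \<in> {1..m}" "f i = f j"
    then show "i = j" using f E unfolding is_partition_of_def by (metis disjoint_iff)
  qed
  moreover have "f ` {1..m} \<subseteq> X" using f E unfolding is_partition_of_def by blast
  ultimately have "card {1..m} \<le> card X" using assms(1) card_inj_on_le by blast
  then show ?thesis by simp
qed

lemma Pt_card:
  assumes "finite X" "X \<noteq> {}" shows "Pt X (card X)"
proof -
  obtain h where h: "bij_betw h {1..card X} X" using ex_bij_betw_nat_finite_1[OF assms(1)] by blast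
  have hi: "inj_on h {1..card X}" and hs: "h ` {1..card X} = X" using h unfolding bij_betw_def by auto
  have "is_partition_of X (card X) (\<lambda>i. {h i})"
    unfolding is_partition_of_def
  proof (intro conjI ballI impI)
    fix i assume "i \<in> {1..card X}"
    then show "{h i} \<noteq> {}" "{h i} \<subseteq> X" using hs by auto
  next
    fix i j assume "i \<in> {1..card X}" "j \<in> {1..card X}" "i \<noteq> j"
    then have "h i \<noteq> h j" using hi unfolding inj_on_def by blast
    then show "{h i} \<inter> {h j} = {}" by simp
  next
    show "(\<Union>i\<in>{1..card X}. {h i}) = X" using hs by auto
  qed
  then show ?thesis using Pt_def by blast
qed

lemma Pt_infinite:
  assumes "infinite X" "m \<ge> 1" shows "Pt X m"
proof -
  obtain A where A: "A \<subseteq> X" "finite A" "card A = m - 1"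
    using infinite_arbitrarily_large[OF assms(1)] by blast
  obtain h where h: "bij_betw h {1..m-1} A" using ex_bij_betw_nat_finite_1[OF A(2)] A(3) by metis
  define E where "E i = (if i \<le> m - 1 then {h i} else X - A)" for i
  have ne: "X - A \<noteq> {}" using A assms(1) by (metis Diff_eq_empty_iff finite_subset)
  have "is_partition_of X m E"
    unfolding is_partition_of_def
  proof (intro conjI ballI impI)
    fix i assume "i \<in> {1..m}"
    show "E i \<noteq> {}" unfolding E_def using ne by simp
    show "E i \<subseteq> X"
    proof (cases "i \<le> m - 1")
      case True
      then have "i \<in> {1..m-1}" using \<open>i \<in> {1..m}\<close> by simp
      then have "h i \<in> A" using h unfolding bij_betw_def by blast
      then show ?thesis using True A(1) unfolding E_def by auto
    qed (auto simp: E_def)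
  next
    fix i j assume "i \<in> {1..m}" "j \<in> {1..m}" "i \<noteq> j"
    then show "E i \<inter> E j = {}" using h unfolding E_def bij_betw_def inj_on_def by auto
  next
    show "(\<Union>i\<in>{1..m}. E i) = X"
    proof
      have "E i \<subseteq> X" if "i \<in> {1..m}" for i
      proof (cases "i \<le> m - 1")
        case True
        then have "i \<in> {1..m-1}" using that by simp
        then have "h i \<in> A" using h unfolding bij_betw_def by blast
        then show ?thesis using True A(1) unfolding E_def by auto
      qed (auto simp: E_def)
      then show "(\<Union>i\<in>{1..m}. E i) \<subseteq> X" by blast
    next
      show "X \<subseteq> (\<Union>i\<in>{1..m}. E i)"
      proof
        fix x assume x: "x \<in> X"
        show "x \<in> (\<Union>i\<in>{1..m}. E i)"
        proof (cases "x \<in> A")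
          case True
          then obtain i where "i \<in> {1..m-1}" "x = h i" using h unfolding bij_betw_def by auto
          then show ?thesis unfolding E_def by (intro UN_I[of i]) auto
        next
          case False
          then show ?thesis unfolding E_def using x assms(2) by (intro UN_I[of m]) auto
        qed
      qed
    qed
  qed
  then show ?thesis using Pt_def by blast
qed

lemma Pt_one: "Pt X 1 \<longleftrightarrow> X \<noteq> {}"
proof
  assume "Pt X 1" then show "X \<noteq> {}" unfolding Pt_def is_partition_of_def by auto
next
  assume "X \<noteq> {}"
  then have "is_partition_of X 1 (\<lambda>_. X)" unfolding is_partition_of_def by auto
  then show "Pt X 1" using Pt_def by blast
qed

theorem mainTheorem3:
  fixes G :: "('g, 'b) monoid_scheme" and H :: "('h, 'c) monoid_scheme"
    and X :: "'x set" and Y :: "'y set"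
    and \<phi> :: "'g \<Rightarrow> 'x \<Rightarrow> 'x" and \<psi> :: "'h \<Rightarrow> 'y \<Rightarrow> 'y"
  assumes "group G" and "group H"
    and "finitely_generated_group G" and "finitely_generated_group H"
    and "transitive_action G X \<phi>" and "transitive_action H Y \<psi>"
    and "Con G X \<phi> = Con H Y \<psi>"
  shows "X \<approx> Y"
proof -
  have XY: "Pt Y m" if "Pt X m" "m \<ge> 1" for m by (rule Pt_transfer[OF assms(7) that])
  have YX: "Pt X m" if "Pt Y m" "m \<ge> 1" for m by (rule Pt_transfer[OF assms(7)[symmetric] that])
  have ne: "X = {} \<longleftrightarrow> Y = {}"
  proof
    assume "X = {}"
    then have "\<not> Pt X 1" using Pt_one[of X] by blast
    then have "\<not> Pt Y 1" using YX[of 1] by auto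
    then show "Y = {}" using Pt_one[of Y] by blast
  next
    assume "Y = {}"
    then have "\<not> Pt Y 1" using Pt_one[of Y] by blast
    then have "\<not> Pt X 1" using XY[of 1] by auto
    then show "X = {}" using Pt_one[of X] by blast
  qed
  show ?thesis
  proof (cases "X = {}")
    case True
    then have "Y = {}" using ne by simp
    then show ?thesis using True unfolding eqpoll_def bij_betw_def by simp
  next
    case False
    then have Yne: "Y \<noteq> {}" using ne by simp
    have fin: "finite X \<longleftrightarrow> finite Y"
    proof
      assume f: "finite X"
      show "finite Y"
      proof (rule ccontr)
        assume "infinite Y"
        then have "Pt Y (card X + 1)" by (rule Pt_infinite) simp
        then have "Pt X (card X + 1)" by (rule YX) simp
        then have "card X + 1 \<le> card X" by (rule Pt_le_card[OF f])
        then show False by simp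
      qed
    next
      assume f: "finite Y"
      show "finite X"
      proof (rule ccontr)
        assume "infinite X"
        then have "Pt X (card Y + 1)" by (rule Pt_infinite) simp
        then have "Pt Y (card Y + 1)" by (rule XY) simp
        then have "card Y + 1 \<le> card Y" by (rule Pt_le_card[OF f])
        then show False by simp
      qed
    qed
    show ?thesis
    proof (cases "finite X")
      case True
      then have fY: "finite Y" using fin by simp
      have c1: "card X \<ge> 1" using True False by (simp add: Suc_le_eq card_gt_0_iff)
      have c2: "card Y \<ge> 1" using fY Yne by (simp add: Suc_le_eq card_gt_0_iff)
      have a: "card X \<le> card Y" using Pt_le_card[OF fY XY[OF Pt_card[OF True False] c1]] .
      have b: "card Y \<le> card X" using Pt_le_card[OF True YX[OF Pt_card[OF fY Yne] c2]] .
      have "card X = card Y" using a b by simp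
      then show ?thesis by (simp add: eqpoll_iff_card[OF True fY])
    next
      case False
      then have iY: "infinite Y" using fin by simp
      obtain e where e: "bij_betw e X (UNIV::nat set)"
        using countableE_infinite[OF trans_countable[OF assms(3,5)] False] by metis
      obtain e' where e': "bij_betw e' Y (UNIV::nat set)"
        using countableE_infinite[OF trans_countable[OF assms(4,6)] iY] by metis
      have 1: "X \<approx> (UNIV::nat set)" unfolding eqpoll_def using e by blast
      have "Y \<approx> (UNIV::nat set)" unfolding eqpoll_def using e' by blast
      then have 2: "(UNIV::nat set) \<approx> Y" by (rule eqpoll_sym)
      show ?thesis using 1 2 by (rule eqpoll_trans)
    qed
  qed
qed

end
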